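(* Let $n\ge2$ and let $\mathcal V$ be a variety with ternary terms $t_1,\dots,t_{n-1}$ satisfying, for some $l,r:\{1,\dots,n-1\}\to\{x,z\}$, the equations $x=t_1(x,l(1),z)$, $t_h(x,r(h),z)=t_{h+1}(x,l(h+1),z)$ ($1\le h<n-1$), $t_{n-1}(x,r(n-1),z)=z$, and $t_h(x,y,x)=x$ for $1\le h\le n-1$. Then: (i) $\mathcal V$ is $(2n-1)$-modular. (ii)(a) If $l(1)=z$, then $\mathcal V$ is $(2n-2)$-modular, and this holds even if $t_1(x,y,x)=x$ is not assumed. (b) If $r(n-1)=x$, then $\mathcal V$ is $(2n-2)$-modular, even if $t_{n-1}(x,y,x)=x$ is not assumed. (c) If $n\ge3$, $l(1)=z$ and $r(n-1)=x$, then $\mathcal V$ is $(2n-3)$-reversed-modular, even if neither $t_1(x,y,x)=x$ nor $t_{n-1}(x,y,x)=x$ is assumed.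
   Context: Day terms: $4$-ary $u_0,\dots,u_m$ with $u_k(x,y,y,x)=x$ for all $k$, $u_0(x,y,z,w)=x$, $u_m(x,y,z,w)=w$, $u_k(x,x,w,w)=u_{k+1}(x,x,w,w)$ for even $k$, $u_k(x,y,y,w)=u_{k+1}(x,y,y,w)$ for odd $k$ ($0\le k<m$); reversed Day terms: even/odd exchanged in the last two conditions. $m$-modular ($m$-reversed-modular): having Day (reversed Day) terms $u_0,\dots,u_m$. *)

theory Defs
  imports Main
begin

text \<open>Terms over a signature with operation symbols of type 'f; variables are natural numbers.
  Variable 0,1,2,3 play the roles of x,y,z,w.\<close>
datatype ('f, 'v) trm = Var 'v | Fn 'f "('f, 'v) trm list"

fun wf_trm :: "('f \<Rightarrow> nat) \<Rightarrow> nat \<Rightarrow> ('f, nat) trm \<Rightarrow> bool" where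
  "wf_trm ar k (Var v) = (v < k)"
| "wf_trm ar k (Fn f ts) = (length ts = ar f \<and> (\<forall>s\<in>set ts. wf_trm ar k s))"

record ('a, 'f) alg =
  car :: "'a set"
  ops :: "'f \<Rightarrow> 'a list \<Rightarrow> 'a"

definition is_alg :: "('f \<Rightarrow> nat) \<Rightarrow> ('a, 'f) alg \<Rightarrow> bool" where
  "is_alg ar A \<longleftrightarrow> (\<forall>f as. length as = ar f \<and> set as \<subseteq> car A \<longrightarrow> ops A f as \<in> car A)"

fun eval :: "('a, 'f) alg \<Rightarrow> (nat \<Rightarrow> 'a) \<Rightarrow> ('f, nat) trm \<Rightarrow> 'a" where
  "eval A \<rho> (Var v) = \<rho> v"
| "eval A \<rho> (Fn f ts) = ops A f (map (eval A \<rho>) ts)"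

definition tapp :: "('a, 'f) alg \<Rightarrow> ('f, nat) trm \<Rightarrow> 'a list \<Rightarrow> 'a" where
  "tapp A t as = eval A (\<lambda>i. as ! i) t"

definition day_terms :: "('f \<Rightarrow> nat) \<Rightarrow> ('a, 'f) alg set \<Rightarrow> nat \<Rightarrow> (nat \<Rightarrow> ('f, nat) trm) \<Rightarrow> bool" where
  "day_terms ar K m u \<longleftrightarrow>
     (\<forall>k\<le>m. wf_trm ar 4 (u k)) \<and>
     (\<forall>A\<in>K. \<forall>x\<in>car A. \<forall>y\<in>car A. \<forall>z\<in>car A. \<forall>w\<in>car A.
        (\<forall>k\<le>m. tapp A (u k) [x, y, y, x] = x) \<and>
        tapp A (u 0) [x, y, z, w] = x \<and>
        tapp A (u m) [x, y, z, w] = w \<and>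
        (\<forall>k<m. even k \<longrightarrow> tapp A (u k) [x, x, w, w] = tapp A (u (Suc k)) [x, x, w, w]) \<and>
        (\<forall>k<m. odd k \<longrightarrow> tapp A (u k) [x, y, y, w] = tapp A (u (Suc k)) [x, y, y, w]))"

definition rev_day_terms :: "('f \<Rightarrow> nat) \<Rightarrow> ('a, 'f) alg set \<Rightarrow> nat \<Rightarrow> (nat \<Rightarrow> ('f, nat) trm) \<Rightarrow> bool" where
  "rev_day_terms ar K m u \<longleftrightarrow>
     (\<forall>k\<le>m. wf_trm ar 4 (u k)) \<and>
     (\<forall>A\<in>K. \<forall>x\<in>car A. \<forall>y\<in>car A. \<forall>z\<in>car A. \<forall>w\<in>car A.
        (\<forall>k\<le>m. tapp A (u k) [x, y, y, x] = x) \<and>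
        tapp A (u 0) [x, y, z, w] = x \<and>
        tapp A (u m) [x, y, z, w] = w \<and>
        (\<forall>k<m. odd k \<longrightarrow> tapp A (u k) [x, x, w, w] = tapp A (u (Suc k)) [x, x, w, w]) \<and>
        (\<forall>k<m. even k \<longrightarrow> tapp A (u k) [x, y, y, w] = tapp A (u (Suc k)) [x, y, y, w]))"

definition modular :: "('f \<Rightarrow> nat) \<Rightarrow> ('a, 'f) alg set \<Rightarrow> nat \<Rightarrow> bool" where
  "modular ar K m \<longleftrightarrow> (\<exists>u. day_terms ar K m u)"

definition rev_modular :: "('f \<Rightarrow> nat) \<Rightarrow> ('a, 'f) alg set \<Rightarrow> nat \<Rightarrow> bool" where
  "rev_modular ar K m \<longleftrightarrow> (\<exists>u. rev_day_terms ar K m u)"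

datatype xz = X | Z

fun pick :: "xz \<Rightarrow> 'a \<Rightarrow> 'a \<Rightarrow> 'a" where
  "pick X a c = a"
| "pick Z a c = c"

end

theory Submission imports Defs begin
fun tsub :: "(nat \<Rightarrow> ('f,nat) trm) \<Rightarrow> ('f,nat) trm \<Rightarrow> ('f,nat) trm" where
  "tsub \<sigma> (Var v) = \<sigma> v"
| "tsub \<sigma> (Fn f ts) = Fn f (map (tsub \<sigma>) ts)"

lemma eval_tsub: "eval A \<rho> (tsub \<sigma> t) = eval A (\<lambda>v. eval A \<rho> (\<sigma> v)) t"
  by (induction t) (auto cong: map_cong)

lemma eval_cong_wf: "wf_trm ar k t \<Longrightarrow> (\<forall>v<k. \<rho> v = \<rho>' v) \<Longrightarrow> eval A \<rho> t = eval A \<rho>' t"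
  by (induction t) (auto cong: map_cong)

lemma wf_tsub: "wf_trm ar k t \<Longrightarrow> (\<forall>v<k. wf_trm ar j (\<sigma> v)) \<Longrightarrow> wf_trm ar j (tsub \<sigma> t)"
  by (induction t) auto

definition T3 :: "('f,nat) trm \<Rightarrow> nat \<Rightarrow> nat \<Rightarrow> nat \<Rightarrow> ('f,nat) trm" where
  "T3 s a b c = tsub (\<lambda>v. Var ([a,b,c] ! v)) s"

lemma tapp_T3: "wf_trm ar 3 s \<Longrightarrow> tapp A (T3 s a b c) as = tapp A s [as!a, as!b, as!c]"
  unfolding tapp_def T3_def eval_tsub
  apply (rule eval_cong_wf[where ar=ar and k=3])
   apply assumption
  apply (auto simp: less_Suc_eq numeral_eq_Suc)
  done

lemma wf_T3: "wf_trm ar 3 s \<Longrightarrow> a < 4 \<Longrightarrow> b < 4 \<Longrightarrow> c < 4 \<Longrightarrow> wf_trm ar 4 (T3 s a b c)"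
  unfolding T3_def
  apply (rule wf_tsub[where k=3])
   apply assumption
  apply (auto simp: less_Suc_eq numeral_eq_Suc)
  done

fun yv :: "xz \<Rightarrow> nat" where "yv X = 1" | "yv Z = 2"

lemma tapp_Var[simp]: "tapp A (Var i) as = as ! i" by (simp add: tapp_def)

lemma yv_lt: "yv c < 4" by (cases c) auto
lemma yv1: "[x,x,w,w] ! yv c = pick c x w" by (cases c) auto
lemma yv2: "[x,y,y,w] ! yv c = y" by (cases c) auto

context
  fixes ar :: "'f \<Rightarrow> nat" and K :: "('a, 'f) alg set" and n :: nat
    and t :: "nat \<Rightarrow> ('f, nat) trm" and l r :: "nat \<Rightarrow> xz"
  assumes n2: "n \<ge> 2"
    and tern: "\<forall>h\<in>{1..n-1}. wf_trm ar 3 (t h)"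
    and first: "\<forall>A\<in>K. \<forall>x\<in>car A. \<forall>z\<in>car A. x = tapp A (t 1) [x, pick (l 1) x z, z]"
    and chain: "\<forall>A\<in>K. \<forall>x\<in>car A. \<forall>z\<in>car A. \<forall>h. 1 \<le> h \<and> h < n - 1 \<longrightarrow>
                  tapp A (t h) [x, pick (r h) x z, z] = tapp A (t (h+1)) [x, pick (l (h+1)) x z, z]"
    and last: "\<forall>A\<in>K. \<forall>x\<in>car A. \<forall>z\<in>car A. tapp A (t (n-1)) [x, pick (r (n-1)) x z, z] = z"
begin

definition "uL h = T3 (t h) 0 (yv (l h)) 3"
definition "uR h = T3 (t h) 0 (yv (r h)) 3"

lemma wfT: "1 \<le> h \<Longrightarrow> h \<le> n - 1 \<Longrightarrow> wf_trm ar 3 (t h)"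
  using tern by auto

lemma wfL: "1 \<le> h \<Longrightarrow> h \<le> n - 1 \<Longrightarrow> wf_trm ar 4 (uL h)"
  unfolding uL_def by (rule wf_T3[OF wfT]) (auto simp: yv_lt)
lemma wfR: "1 \<le> h \<Longrightarrow> h \<le> n - 1 \<Longrightarrow> wf_trm ar 4 (uR h)"
  unfolding uR_def by (rule wf_T3[OF wfT]) (auto simp: yv_lt)

lemma vL1: "1 \<le> h \<Longrightarrow> h \<le> n - 1 \<Longrightarrow> tapp A (uL h) [x,x,w,w] = tapp A (t h) [x, pick (l h) x w, w]"
  unfolding uL_def by (simp add: tapp_T3[OF wfT] yv1)
lemma vR1: "1 \<le> h \<Longrightarrow> h \<le> n - 1 \<Longrightarrow> tapp A (uR h) [x,x,w,w] = tapp A (t h) [x, pick (r h) x w, w]"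
  unfolding uR_def by (simp add: tapp_T3[OF wfT] yv1)
lemma vL2: "1 \<le> h \<Longrightarrow> h \<le> n - 1 \<Longrightarrow> tapp A (uL h) [x,y,y,w] = tapp A (t h) [x, y, w]"
  unfolding uL_def by (simp add: tapp_T3[OF wfT] yv2)
lemma vR2: "1 \<le> h \<Longrightarrow> h \<le> n - 1 \<Longrightarrow> tapp A (uR h) [x,y,y,w] = tapp A (t h) [x, y, w]"
  unfolding uR_def by (simp add: tapp_T3[OF wfT] yv2)

lemma part_i:
  assumes idt: "\<forall>h\<in>{1..n-1}. \<forall>A\<in>K. \<forall>x\<in>car A. \<forall>y\<in>car A. tapp A (t h) [x, y, x] = x"
  shows "modular ar K (2*n - 1)"
proof -
  define u where "u k = (if k = 0 then Var 0 else if k < 2*n-1 then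
     (if odd k then uL ((k+1) div 2) else uR (k div 2)) else Var 3)" for k
  have "day_terms ar K (2*n-1) u"
    unfolding day_terms_def
  proof (intro conjI ballI allI impI)
    fix k assume "k \<le> 2*n-1"
    then show "wf_trm ar 4 (u k)"
      unfolding u_def by (auto intro!: wfL wfR elim!: oddE)
  next
    fix A x y z w assume A: "A \<in> K" and xyzw: "x \<in> car A" "y \<in> car A" "z \<in> car A" "w \<in> car A"
    {
      fix k assume "k \<le> 2*n-1"
      then show "tapp A (u k) [x,y,y,x] = x"
      proof -
        have hL: "tapp A (uL h) [x,y,y,x] = x" "tapp A (uR h) [x,y,y,x] = x" if "1 \<le> h" "h \<le> n-1" for h
          using that idt A xyzw by (simp_all add: vL2 vR2)
        show ?thesis
        proof (cases "k = 0 \<or> k \<ge> 2*n-1")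
          case True then show ?thesis by (auto simp: u_def tapp_Var)
        next
          case False
          show ?thesis
          proof (cases "odd k")
            case True
            then have "u k = uL ((k+1) div 2)" "1 \<le> (k+1) div 2" "(k+1) div 2 \<le> n-1"
              using False by (auto simp: u_def elim!: oddE)
            then show ?thesis using hL by simp
          next
            case F2: False
            then have "u k = uR (k div 2)" "1 \<le> k div 2" "k div 2 \<le> n-1"
              using False by (auto simp: u_def elim!: evenE)
            then show ?thesis using hL by simp
          qed
        qed
      qed
    }
    show "tapp A (u 0) [x,y,z,w] = x" by (simp add: u_def tapp_Var)
    show "tapp A (u (2*n-1)) [x,y,z,w] = w" using n2 by (simp add: u_def tapp_Var)
    {
      fix k assume k: "k < 2*n-1" "even k"
      show "tapp A (u k) [x,x,w,w] = tapp A (u (Suc k)) [x,x,w,w]"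
      proof (cases "k = 0")
        case True
        have "u k = Var 0" "u (Suc k) = uL 1" using True n2 by (auto simp: u_def)
        then show ?thesis using n2 first A xyzw by (simp add: vL1)
      next
        case False
        define h where "h = k div 2"
        have kh: "k = 2*h" "1 \<le> h" "h \<le> n-1" using k False unfolding h_def by auto
        have uk: "u k = uR h" using k kh False by (simp add: u_def)
        show ?thesis
        proof (cases "Suc k < 2*n-1")
          case True
          then have "u (Suc k) = uL (h+1)" using kh by (simp add: u_def)
          then show ?thesis using uk kh True chain A xyzw by (simp add: vL1 vR1)
        next
          case False
          then have "u (Suc k) = Var 3" "h = n-1" using kh k by (auto simp: u_def)
          then show ?thesis using uk kh last A xyzw by (simp add: vR1 tapp_Var)
        qed
      qed
    }
    {
      fix k assume k: "k < 2*n-1" "odd k"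
      define h where "h = (k+1) div 2"
      have kh: "k = 2*h - 1" "1 \<le> h" "h \<le> n-1" using k unfolding h_def by (auto elim!: oddE)
      have e: "k \<noteq> 0" "Suc k < 2*n-1" "Suc k div 2 = h" "(k+1) div 2 = h" "\<not> odd (Suc k)"
        using k unfolding h_def by presburger+
      have "u k = uL h" "u (Suc k) = uR h" using k e unfolding u_def by simp_all
      then show "tapp A (u k) [x,y,y,w] = tapp A (u (Suc k)) [x,y,y,w]"
        using kh by (simp add: vL2 vR2)
    }
  qed
  then show ?thesis unfolding modular_def by blast
qed


definition "SE = T3 (t (n-1)) 1 (yv (l (n-1))) 3"
definition "S1 = T3 (t 1) 0 (yv (r 1)) 2"

lemma wfSE: "wf_trm ar 4 SE" unfolding SE_def using n2 by (intro wf_T3 wfT) (auto simp: yv_lt)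
lemma wfS1: "wf_trm ar 4 S1" unfolding S1_def using n2 by (intro wf_T3 wfT) (auto simp: yv_lt)

lemma vSE1: "tapp A SE [x,x,w,w] = tapp A (t (n-1)) [x, pick (l (n-1)) x w, w]"
  unfolding SE_def using n2 by (simp add: tapp_T3[OF wfT] yv1)
lemma vSE2: "r (n-1) = X \<Longrightarrow> A \<in> K \<Longrightarrow> y \<in> car A \<Longrightarrow> w \<in> car A \<Longrightarrow> tapp A SE [x,y,y,w] = w"
  unfolding SE_def using n2 last by (simp add: tapp_T3[OF wfT] yv2)
lemma vS11: "tapp A S1 [x,x,w,w] = tapp A (t 1) [x, pick (r 1) x w, w]"
  unfolding S1_def using n2 by (simp add: tapp_T3[OF wfT] yv1)
lemma vS12: "l 1 = Z \<Longrightarrow> A \<in> K \<Longrightarrow> x \<in> car A \<Longrightarrow> y \<in> car A \<Longrightarrow> tapp A S1 [x,y,y,w] = x"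
  unfolding S1_def using n2 first by (simp add: tapp_T3[OF wfT] yv2)

lemma part_b:
  assumes rX: "r (n-1) = X"
    and idt: "\<forall>h\<in>{1..n-2}. \<forall>A\<in>K. \<forall>x\<in>car A. \<forall>y\<in>car A. tapp A (t h) [x, y, x] = x"
  shows "modular ar K (2*n - 2)"
proof -
  define u where "u k = (if k = 0 then Var 0 else if k < 2*n-3 then
     (if odd k then uL ((k+1) div 2) else uR (k div 2)) else if k = 2*n-3 then SE else Var 3)" for k
  have "day_terms ar K (2*n-2) u"
    unfolding day_terms_def
  proof (intro conjI ballI allI impI)
    fix k assume "k \<le> 2*n-2"
    then show "wf_trm ar 4 (u k)"
      unfolding u_def by (auto intro!: wfL wfR wfSE elim!: oddE)
  next
    fix A x y z w assume A: "A \<in> K" and xyzw: "x \<in> car A" "y \<in> car A" "z \<in> car A" "w \<in> car A"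
    {
      fix k assume "k \<le> 2*n-2"
      show "tapp A (u k) [x,y,y,x] = x"
      proof -
        have hL: "tapp A (uL h) [x,y,y,x] = x" "tapp A (uR h) [x,y,y,x] = x" if "1 \<le> h" "h \<le> n-2" for h
          using that idt A xyzw by (simp_all add: vL2 vR2)
        show ?thesis
        proof (cases "k = 0 \<or> k \<ge> 2*n-3")
          case True then show ?thesis using vSE2[OF rX A] xyzw by (auto simp: u_def)
        next
          case False
          show ?thesis
          proof (cases "odd k")
            case True
            then have "u k = uL ((k+1) div 2)" "1 \<le> (k+1) div 2" "(k+1) div 2 \<le> n-2"
              using False by (auto simp: u_def elim!: oddE)
            then show ?thesis using hL by simp
          next
            case F2: False
            then have "u k = uR (k div 2)" "1 \<le> k div 2" "k div 2 \<le> n-2"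
              using False by (auto simp: u_def elim!: evenE)
            then show ?thesis using hL by simp
          qed
        qed
      qed
    }
    show "tapp A (u 0) [x,y,z,w] = x" by (simp add: u_def)
    show "tapp A (u (2*n-2)) [x,y,z,w] = w"
    proof -
      have "\<not> 2*n-2 < 2*n-3" "2*n-2 \<noteq> 2*n-3" "2*n-2 \<noteq> 0" using n2 by auto
      then show ?thesis by (simp add: u_def)
    qed
    {
      fix k assume k: "k < 2*n-2" "even k"
      show "tapp A (u k) [x,x,w,w] = tapp A (u (Suc k)) [x,x,w,w]"
      proof (cases "k = 0")
        case True
        show ?thesis
        proof (cases "n = 2")
          case True
          have "u k = Var 0" "u (Suc k) = SE" using True \<open>k = 0\<close> by (auto simp: u_def)
          then show ?thesis using True first A xyzw vSE1[of A x w] by simp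
        next
          case False
          have "u k = Var 0" "u (Suc k) = uL 1" using False \<open>k=0\<close> n2 by (auto simp: u_def)
          then show ?thesis using n2 False first A xyzw by (simp add: vL1)
        qed
      next
        case False
        define h where "h = k div 2"
        have kh: "k = 2*h" "1 \<le> h" "h \<le> n-2" "k < 2*n-3" using k False unfolding h_def by presburger+
        have uk: "u k = uR h" using k kh False by (simp add: u_def)
        show ?thesis
        proof (cases "Suc k < 2*n-3")
          case True
          then have "u (Suc k) = uL (h+1)" using kh by (simp add: u_def)
          then show ?thesis using uk kh True chain A xyzw by (simp add: vL1 vR1)
        next
          case False
          then have "u (Suc k) = SE" "h = n-2" using kh k by (auto simp: u_def)
          moreover have "Suc (n-2) = n-1" using n2 by simp
          ultimately show ?thesis using uk kh chain A xyzw n2 by (simp add: vR1 vSE1)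
        qed
      qed
    }
    {
      fix k assume k: "k < 2*n-2" "odd k"
      show "tapp A (u k) [x,y,y,w] = tapp A (u (Suc k)) [x,y,y,w]"
      proof (cases "k = 2*n-3")
        case True
        then have "u k = SE" "u (Suc k) = Var 3" using n2 by (auto simp: u_def)
        then show ?thesis using vSE2[OF rX A] xyzw by simp
      next
        case False
        define h where "h = (k+1) div 2"
        have kh: "1 \<le> h" "h \<le> n-2" using k False unfolding h_def by presburger+
        have e: "k \<noteq> 0" "Suc k < 2*n-3" "k < 2*n-3" "Suc k div 2 = h" "(k+1) div 2 = h" "\<not> odd (Suc k)"
          using k False unfolding h_def by presburger+
        have "u k = uL h" "u (Suc k) = uR h" using k e unfolding u_def by simp_all
        then show ?thesis using kh by (simp add: vL2 vR2)
      qed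
    }
  qed
  then show ?thesis unfolding modular_def by blast
qed

lemma part_iv:
  assumes n3: "n \<ge> 3" and lZ: "l 1 = Z" and rX: "r (n-1) = X"
    and idt: "\<forall>h\<in>{2..n-2}. \<forall>A\<in>K. \<forall>x\<in>car A. \<forall>y\<in>car A. tapp A (t h) [x, y, x] = x"
  shows "rev_modular ar K (2*n - 3)"
proof -
  define u where "u k = (if k = 0 then Var 0 else if k = 1 then S1 else if k < 2*n-4 then
     (if odd k then uR ((k+1) div 2) else uL (k div 2 + 1)) else if k = 2*n-4 then SE else Var 3)" for k
  have "rev_day_terms ar K (2*n-3) u"
    unfolding rev_day_terms_def
  proof (intro conjI ballI allI impI)
    fix k assume "k \<le> 2*n-3"
    then show "wf_trm ar 4 (u k)"
      unfolding u_def by (auto intro!: wfL wfR wfSE wfS1 elim!: oddE)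
  next
    fix A x y z w assume A: "A \<in> K" and xyzw: "x \<in> car A" "y \<in> car A" "z \<in> car A" "w \<in> car A"
    {
      fix k assume "k \<le> 2*n-3"
      show "tapp A (u k) [x,y,y,x] = x"
      proof -
        have hL: "tapp A (uL h) [x,y,y,x] = x" "tapp A (uR h) [x,y,y,x] = x" if "2 \<le> h" "h \<le> n-2" for h
          using that idt A xyzw by (simp_all add: vL2 vR2)
        show ?thesis
        proof (cases "k = 0 \<or> k = 1 \<or> k \<ge> 2*n-4")
          case True then show ?thesis using vSE2[OF rX A] vS12[OF lZ A] xyzw by (auto simp: u_def)
        next
          case False
          show ?thesis
          proof (cases "odd k")
            case True
            then have "u k = uR ((k+1) div 2)" "2 \<le> (k+1) div 2" "(k+1) div 2 \<le> n-2"
              using False by (auto simp: u_def elim!: oddE)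
            then show ?thesis using hL by simp
          next
            case F2: False
            then have "u k = uL (k div 2 + 1)" "2 \<le> k div 2 + 1" "k div 2 + 1 \<le> n-2"
              using False by (auto simp: u_def elim!: evenE)
            then show ?thesis using hL by simp
          qed
        qed
      qed
    }
    show "tapp A (u 0) [x,y,z,w] = x" by (simp add: u_def)
    show "tapp A (u (2*n-3)) [x,y,z,w] = w"
    proof -
      have "\<not> 2*n-3 < 2*n-4" "2*n-3 \<noteq> 2*n-4" "2*n-3 \<noteq> 0" "2*n-3 \<noteq> 1" using n3 by auto
      then show ?thesis by (simp add: u_def)
    qed
    {
      fix k assume k: "k < 2*n-3" "odd k"
      show "tapp A (u k) [x,x,w,w] = tapp A (u (Suc k)) [x,x,w,w]"
      proof (cases "k = 1")
        case True
        show ?thesis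
        proof (cases "n = 3")
          case True
          have "u k = S1" "u (Suc k) = SE" using True \<open>k = 1\<close> by (auto simp: u_def)
          then show ?thesis using True chain A xyzw vSE1[of A x w] by (simp add: vS11 numeral_2_eq_2)
        next
          case False
          have "u k = S1" "u (Suc k) = uL 2" using False \<open>k=1\<close> n3 by (auto simp: u_def numeral_2_eq_2)
          then show ?thesis using n3 False chain A xyzw by (simp add: vL1 vS11 numeral_2_eq_2)
        qed
      next
        case False
        define h where "h = (k+1) div 2"
        have kh: "k = 2*h-1" "2 \<le> h" "h \<le> n-2" "k < 2*n-4" "k \<noteq> 0" "k \<noteq> 1" "(k+1) div 2 = h"
          using k False unfolding h_def by presburger+
        have uk: "u k = uR h" using k kh False by (simp add: u_def)
        show ?thesis
        proof (cases "Suc k < 2*n-4")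
          case True
          have "Suc k div 2 + 1 = h + 1" "\<not> odd (Suc k)" using kh k by presburger+
          then have "u (Suc k) = uL (h+1)" using kh True by (simp add: u_def)
          then show ?thesis using uk kh True chain A xyzw by (simp add: vL1 vR1)
        next
          case False
          then have "u (Suc k) = SE" "h = n-2" using kh k by (auto simp: u_def)
          moreover have "Suc (n-2) = n-1" using n3 by simp
          ultimately show ?thesis using uk kh chain A xyzw n3 by (simp add: vR1 vSE1)
        qed
      qed
    }
    {
      fix k assume k: "k < 2*n-3" "even k"
      show "tapp A (u k) [x,y,y,w] = tapp A (u (Suc k)) [x,y,y,w]"
      proof (cases "k = 2*n-4 \<or> k = 0")
        case True
        then show ?thesis
        proof
          assume "k = 2*n-4"
          then have "u k = SE" "u (Suc k) = Var 3" using n3 by (auto simp: u_def)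
          then show ?thesis using vSE2[OF rX A] xyzw by simp
        next
          assume "k = 0"
          then have "u k = Var 0" "u (Suc k) = S1" by (auto simp: u_def)
          then show ?thesis using vS12[OF lZ A] xyzw by simp
        qed
      next
        case False
        define h where "h = k div 2 + 1"
        have kh: "2 \<le> h" "h \<le> n-2" using k False unfolding h_def by presburger+
        have e: "k \<noteq> 0" "k \<noteq> 1" "Suc k \<noteq> 1" "Suc k < 2*n-4" "k < 2*n-4" "(Suc k + 1) div 2 = h" "k div 2 + 1 = h" "odd (Suc k)"
          using k False unfolding h_def by presburger+
        have "u k = uL h" "u (Suc k) = uR h" using k e unfolding u_def by simp_all
        then show ?thesis using kh by (simp add: vL2 vR2)
      qed
    }
  qed
  then show ?thesis unfolding rev_modular_def by blast
qed
end
fun swp :: "xz \<Rightarrow> xz" where "swp X = Z" | "swp Z = X"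
lemma pick_swp: "pick (swp c) x z = pick c z x" by (cases c) auto

lemma wf_T3k: "wf_trm ar 3 s \<Longrightarrow> a < k \<Longrightarrow> b < k \<Longrightarrow> c < k \<Longrightarrow> wf_trm ar k (T3 s a b c)"
  unfolding T3_def
  apply (rule wf_tsub[where k=3])
   apply assumption
  apply (auto simp: less_Suc_eq numeral_eq_Suc)
  done

lemma mirror:
  fixes ar :: "'f \<Rightarrow> nat" and K :: "('a, 'f) alg set" and n :: nat
    and t :: "nat \<Rightarrow> ('f, nat) trm" and l r :: "nat \<Rightarrow> xz"
  assumes n2: "n \<ge> 2"
    and tern: "\<forall>h\<in>{1..n-1}. wf_trm ar 3 (t h)"
    and first: "\<forall>A\<in>K. \<forall>x\<in>car A. \<forall>z\<in>car A. x = tapp A (t 1) [x, pick (l 1) x z, z]"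
    and chain: "\<forall>A\<in>K. \<forall>x\<in>car A. \<forall>z\<in>car A. \<forall>h. 1 \<le> h \<and> h < n - 1 \<longrightarrow>
                  tapp A (t h) [x, pick (r h) x z, z] = tapp A (t (h+1)) [x, pick (l (h+1)) x z, z]"
    and last: "\<forall>A\<in>K. \<forall>x\<in>car A. \<forall>z\<in>car A. tapp A (t (n-1)) [x, pick (r (n-1)) x z, z] = z"
    and t'_def: "t' = (\<lambda>h. T3 (t (n-h)) 2 1 0)" and l'_def: "l' = (\<lambda>h. swp (r (n-h)))" and r'_def: "r' = (\<lambda>h. swp (l (n-h)))"
  shows "\<forall>h\<in>{1..n-1}. wf_trm ar 3 (t' h)"
    and "\<forall>A\<in>K. \<forall>x\<in>car A. \<forall>z\<in>car A. x = tapp A (t' 1) [x, pick (l' 1) x z, z]"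
    and "\<forall>A\<in>K. \<forall>x\<in>car A. \<forall>z\<in>car A. \<forall>h. 1 \<le> h \<and> h < n - 1 \<longrightarrow>
                  tapp A (t' h) [x, pick (r' h) x z, z] = tapp A (t' (h+1)) [x, pick (l' (h+1)) x z, z]"
    and "\<forall>A\<in>K. \<forall>x\<in>car A. \<forall>z\<in>car A. tapp A (t' (n-1)) [x, pick (r' (n-1)) x z, z] = z"
    and "\<And>h A as. 1 \<le> h \<Longrightarrow> h \<le> n-1 \<Longrightarrow> tapp A (t' h) as = tapp A (t (n-h)) [as!2, as!1, as!0]"
proof -
  have wt: "wf_trm ar 3 (t g)" if "1 \<le> g" "g \<le> n-1" for g using tern that by auto
  show tt: "\<And>h A as. 1 \<le> h \<Longrightarrow> h \<le> n-1 \<Longrightarrow> tapp A (t' h) as = tapp A (t (n-h)) [as!2, as!1, as!0]"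
    unfolding t'_def by (rule tapp_T3[OF wt]) auto
  show "\<forall>h\<in>{1..n-1}. wf_trm ar 3 (t' h)"
    unfolding t'_def by (auto intro!: wf_T3k wt)
  show "\<forall>A\<in>K. \<forall>x\<in>car A. \<forall>z\<in>car A. x = tapp A (t' 1) [x, pick (l' 1) x z, z]"
    using last n2 by (simp add: tt l'_def pick_swp)
  show "\<forall>A\<in>K. \<forall>x\<in>car A. \<forall>z\<in>car A. tapp A (t' (n-1)) [x, pick (r' (n-1)) x z, z] = z"
    using first n2 by (simp add: tt r'_def pick_swp)
  show "\<forall>A\<in>K. \<forall>x\<in>car A. \<forall>z\<in>car A. \<forall>h. 1 \<le> h \<and> h < n - 1 \<longrightarrow>
                  tapp A (t' h) [x, pick (r' h) x z, z] = tapp A (t' (h+1)) [x, pick (l' (h+1)) x z, z]"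
  proof (intro ballI allI impI)
    fix A x z h assume A: "A \<in> K" "x \<in> car A" "z \<in> car A" and h: "1 \<le> h \<and> h < n - 1"
    define g where "g = n - h - 1"
    have g: "1 \<le> g" "g < n-1" "n - h = g + 1" "n - (h+1) = g" using h n2 unfolding g_def by auto
    have "tapp A (t g) [z, pick (r g) z x, x] = tapp A (t (g+1)) [z, pick (l (g+1)) z x, x]"
      using chain A g by blast
    then show "tapp A (t' h) [x, pick (r' h) x z, z] = tapp A (t' (h+1)) [x, pick (l' (h+1)) x z, z]"
      using h g by (simp add: tt r'_def l'_def pick_swp)
  qed
qed

theorem corollary7p11:
  fixes ar :: "'f \<Rightarrow> nat"
    and K :: "('a, 'f) alg set"
    and n :: nat
    and t :: "nat \<Rightarrow> ('f, nat) trm"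
    and l r :: "nat \<Rightarrow> xz"
  assumes n2: "n \<ge> 2"
    and algs: "\<forall>A\<in>K. is_alg ar A"
    and tern: "\<forall>h\<in>{1..n-1}. wf_trm ar 3 (t h)"
    and first: "\<forall>A\<in>K. \<forall>x\<in>car A. \<forall>z\<in>car A. x = tapp A (t 1) [x, pick (l 1) x z, z]"
    and chain: "\<forall>A\<in>K. \<forall>x\<in>car A. \<forall>z\<in>car A. \<forall>h. 1 \<le> h \<and> h < n - 1 \<longrightarrow>
                  tapp A (t h) [x, pick (r h) x z, z] = tapp A (t (h+1)) [x, pick (l (h+1)) x z, z]"
    and last: "\<forall>A\<in>K. \<forall>x\<in>car A. \<forall>z\<in>car A. tapp A (t (n-1)) [x, pick (r (n-1)) x z, z] = z"
  shows "((\<forall>h\<in>{1..n-1}. \<forall>A\<in>K. \<forall>x\<in>car A. \<forall>y\<in>car A. tapp A (t h) [x, y, x] = x)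
            \<longrightarrow> modular ar K (2*n - 1))
       \<and> ((l 1 = Z \<and> (\<forall>h\<in>{2..n-1}. \<forall>A\<in>K. \<forall>x\<in>car A. \<forall>y\<in>car A. tapp A (t h) [x, y, x] = x))
            \<longrightarrow> modular ar K (2*n - 2))
       \<and> ((r (n-1) = X \<and> (\<forall>h\<in>{1..n-2}. \<forall>A\<in>K. \<forall>x\<in>car A. \<forall>y\<in>car A. tapp A (t h) [x, y, x] = x))
            \<longrightarrow> modular ar K (2*n - 2))
       \<and> ((n \<ge> 3 \<and> l 1 = Z \<and> r (n-1) = X \<and>
             (\<forall>h\<in>{2..n-2}. \<forall>A\<in>K. \<forall>x\<in>car A. \<forall>y\<in>car A. tapp A (t h) [x, y, x] = x))
            \<longrightarrow> rev_modular ar K (2*n - 3))"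
proof (intro conjI impI)
  assume "\<forall>h\<in>{1..n-1}. \<forall>A\<in>K. \<forall>x\<in>car A. \<forall>y\<in>car A. tapp A (t h) [x, y, x] = x"
  then show "modular ar K (2*n - 1)" by (rule part_i[OF n2 tern first chain last])
next
  assume "r (n-1) = X \<and> (\<forall>h\<in>{1..n-2}. \<forall>A\<in>K. \<forall>x\<in>car A. \<forall>y\<in>car A. tapp A (t h) [x, y, x] = x)"
  then show "modular ar K (2*n - 2)" using part_b[OF n2 tern first chain last] by blast
next
  assume "n \<ge> 3 \<and> l 1 = Z \<and> r (n-1) = X \<and>
             (\<forall>h\<in>{2..n-2}. \<forall>A\<in>K. \<forall>x\<in>car A. \<forall>y\<in>car A. tapp A (t h) [x, y, x] = x)"
  then show "rev_modular ar K (2*n - 3)" using part_iv[OF n2 tern first chain last] by blast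
next
  assume a: "l 1 = Z \<and> (\<forall>h\<in>{2..n-1}. \<forall>A\<in>K. \<forall>x\<in>car A. \<forall>y\<in>car A. tapp A (t h) [x, y, x] = x)"
  define t' where "t' = (\<lambda>h. T3 (t (n-h)) 2 1 0)"
  define l' where "l' = (\<lambda>h. swp (r (n-h)))"
  define r' where "r' = (\<lambda>h. swp (l (n-h)))"
  note M = mirror[OF n2 tern first chain last t'_def l'_def r'_def]
  have rX: "r' (n-1) = X" using a n2 by (simp add: r'_def)
  have idt: "\<forall>h\<in>{1..n-2}. \<forall>A\<in>K. \<forall>x\<in>car A. \<forall>y\<in>car A. tapp A (t' h) [x, y, x] = x"
  proof (intro ballI)
    fix h A x y assume h: "h \<in> {1..n-2}" and A: "A \<in> K" "x \<in> car A" "y \<in> car A"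
    have "n - h \<in> {2..n-1}" using h n2 by auto
    then show "tapp A (t' h) [x, y, x] = x" using M(5)[of h A "[x,y,x]"] h a A by (auto simp: t'_def)
  qed
  show "modular ar K (2*n - 2)" by (rule part_b[OF n2 M(1-4) rX idt])
qed

end
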